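(* Let $k$ be a field and $V$ a $k$-vector space of dimension $n>2$. Define $b:V\times V\to V\wedge V$ by $b(u,v)=u\wedge v$. Then $b$ is alternating and $\operatorname{Adj}(b)=\{\lambda 1_V:\lambda\in k\}\cong k$ with trivial involution; that is, $b$ is $\perp$-indecomposable of orthogonal type.
   Context: $\operatorname{Adj}(b)$ is the set of $f\in\operatorname{End}V$ for which there is $f^*\in\operatorname{End}V$ with $b(uf,v)=b(u,vf^* )$ for all $u,v\in V$, with involution $f\mapsto f^*$. A bilinear map is $\perp$-indecomposable if $V$ has no decomposition into a set $\mathcal{X}\neq\{V\}$ of pairwise $b$-orthogonal subspaces generating $V$ with no proper subset generating $V$; orthogonal type means $\operatorname{Adj}(b)$ modulo its Jacobson radical is a field with trivial involution. *)

theory Defs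
  imports Main "HOL-Library.Function_Algebras"
begin

text \<open>V is modelled as k^n = ('n \<Rightarrow> 'k) for a finite index type 'n (dim V = CARD('n)).
  Vector addition/zero are the pointwise ones on functions.\<close>

definition vsmult :: "'k::field \<Rightarrow> ('n \<Rightarrow> 'k) \<Rightarrow> ('n \<Rightarrow> 'k)" (infixr "*v" 75) where
  "c *v v = (\<lambda>i. c * v i)"

definition klinear :: "(('n \<Rightarrow> 'k::field) \<Rightarrow> ('m \<Rightarrow> 'k)) \<Rightarrow> bool" where
  "klinear f \<longleftrightarrow> (\<forall>u v. f (u + v) = f u + f v) \<and> (\<forall>c u. f (c *v u) = c *v f u)"

definition kbilinear :: "(('n \<Rightarrow> 'k::field) \<Rightarrow> ('n \<Rightarrow> 'k) \<Rightarrow> ('m \<Rightarrow> 'k)) \<Rightarrow> bool" where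
  "kbilinear b \<longleftrightarrow> (\<forall>u. klinear (b u)) \<and> (\<forall>v. klinear (\<lambda>u. b u v))"

text \<open>The exterior square V \<and> V realised as alternating n x n matrices:
  u \<and> v corresponds to u v^T - v u^T (an isomorphism onto \<Lambda>^2 V in every characteristic).\<close>
definition wedge :: "('n \<Rightarrow> 'k::field) \<Rightarrow> ('n \<Rightarrow> 'k) \<Rightarrow> ('n \<times> 'n \<Rightarrow> 'k)" where
  "wedge u v = (\<lambda>(i, j). u i * v j - u j * v i)"

definition alternating :: "(('n \<Rightarrow> 'k::field) \<Rightarrow> ('n \<Rightarrow> 'k) \<Rightarrow> ('m \<Rightarrow> 'k)) \<Rightarrow> bool" where
  "alternating b \<longleftrightarrow> (\<forall>u. b u u = 0)"

definition is_adjoint :: "(('n \<Rightarrow> 'k::field) \<Rightarrow> ('n \<Rightarrow> 'k) \<Rightarrow> ('m \<Rightarrow> 'k))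
    \<Rightarrow> (('n \<Rightarrow> 'k) \<Rightarrow> ('n \<Rightarrow> 'k)) \<Rightarrow> (('n \<Rightarrow> 'k) \<Rightarrow> ('n \<Rightarrow> 'k)) \<Rightarrow> bool" where
  "is_adjoint b f g \<longleftrightarrow> klinear g \<and> (\<forall>u v. b (f u) v = b u (g v))"

definition Adj :: "(('n \<Rightarrow> 'k::field) \<Rightarrow> ('n \<Rightarrow> 'k) \<Rightarrow> ('m \<Rightarrow> 'k))
    \<Rightarrow> (('n \<Rightarrow> 'k) \<Rightarrow> ('n \<Rightarrow> 'k)) set" where
  "Adj b = {f. klinear f \<and> (\<exists>g. is_adjoint b f g)}"

definition ksubspace :: "('n \<Rightarrow> 'k::field) set \<Rightarrow> bool" where
  "ksubspace W \<longleftrightarrow> 0 \<in> W \<and> (\<forall>u\<in>W. \<forall>v\<in>W. u + v \<in> W) \<and> (\<forall>c. \<forall>u\<in>W. c *v u \<in> W)"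

definition kspan :: "('n \<Rightarrow> 'k::field) set \<Rightarrow> ('n \<Rightarrow> 'k) set" where
  "kspan S = \<Inter>{W. ksubspace W \<and> S \<subseteq> W}"

definition perp_decomposition :: "(('n \<Rightarrow> 'k::field) \<Rightarrow> ('n \<Rightarrow> 'k) \<Rightarrow> ('m \<Rightarrow> 'k))
    \<Rightarrow> ('n \<Rightarrow> 'k) set set \<Rightarrow> bool" where
  "perp_decomposition b X \<longleftrightarrow>
     (\<forall>W\<in>X. ksubspace W) \<and>
     (\<forall>U\<in>X. \<forall>W\<in>X. U \<noteq> W \<longrightarrow> (\<forall>u\<in>U. \<forall>w\<in>W. b u w = 0 \<and> b w u = 0)) \<and>
     kspan (\<Union>X) = UNIV \<and>
     (\<forall>Y. Y \<subset> X \<longrightarrow> kspan (\<Union>Y) \<noteq> UNIV)"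

definition perp_indecomposable :: "(('n \<Rightarrow> 'k::field) \<Rightarrow> ('n \<Rightarrow> 'k) \<Rightarrow> ('m \<Rightarrow> 'k)) \<Rightarrow> bool" where
  "perp_indecomposable b \<longleftrightarrow> (\<forall>X. perp_decomposition b X \<longrightarrow> X = {UNIV})"

definition jacobson_radical :: "(('n \<Rightarrow> 'k::field) \<Rightarrow> ('n \<Rightarrow> 'k)) set \<Rightarrow> (('n \<Rightarrow> 'k) \<Rightarrow> ('n \<Rightarrow> 'k)) set" where
  "jacobson_radical A = {a\<in>A. \<forall>x\<in>A. \<exists>y\<in>A.
      (\<lambda>v. v - x (a v)) \<circ> y = id \<and> y \<circ> (\<lambda>v. v - x (a v)) = id}"

end

theory Submission
  imports Defs
begin

definition ev :: "'n \<Rightarrow> ('n \<Rightarrow> 'k::field)" where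
  "ev a = (\<lambda>i. if i = a then 1 else 0)"

lemma ex_other2:
  assumes "card (UNIV :: 'n::finite set) > 2"
  shows "\<exists>c::'n. c \<noteq> a \<and> c \<noteq> b"
proof (rule ccontr)
  assume "\<not> ?thesis"
  then have "UNIV \<subseteq> {a, b}" by auto
  then have "card (UNIV :: 'n set) \<le> card {a,b}" by (intro card_mono) auto
  also have "\<dots> \<le> 2" by (simp add: card_insert_if)
  finally show False using assms by simp
qed

lemma ex_other:
  assumes "card (UNIV :: 'n::finite set) > 2"
  shows "\<exists>c::'n. c \<noteq> a"
  using ex_other2[OF assms] by blast

lemma wcomp: "wedge u v (i, j) = u i * v j - u j * v i"
  by (simp add: wedge_def)

lemma key:
  fixes f g :: "('n::finite \<Rightarrow> 'k::field) \<Rightarrow> ('n \<Rightarrow> 'k)"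
  assumes dim: "card (UNIV :: 'n set) > 2"
    and eq: "\<And>u v. wedge (f u) v = wedge u (g v)"
  shows "\<exists>c. \<forall>u. f u = c *v u"
proof -
  have comp: "\<And>u v i j. f u i * v j - f u j * v i = u i * g v j - u j * g v i"
    using eq by (metis wcomp)
  have G0: "g (ev b) d = 0" if "d \<noteq> b" for b d
  proof -
    obtain c where c: "c \<noteq> b" "c \<noteq> d" using ex_other2[OF dim] by blast
    have "f (ev c) c * ev b d - f (ev c) d * ev b c = ev c c * g (ev b) d - ev c d * g (ev b) c"
      by (rule comp)
    then show ?thesis using c that by (simp add: ev_def)
  qed
  define \<mu> where "\<mu> b = g (ev b) b" for b
  have F: "f u c = u c * \<mu> b" if "b \<noteq> c" for u c b
  proof -
    have "f u c * ev b b - f u b * ev b c = u c * g (ev b) b - u b * g (ev b) c"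
      by (rule comp)
    then show ?thesis using that G0[of c b] by (simp add: ev_def \<mu>_def)
  qed
  have C: "\<mu> b = \<mu> b'" for b b'
  proof (cases "b = b'")
    case False
    obtain c where c: "c \<noteq> b" "c \<noteq> b'" using ex_other2[OF dim] by blast
    have "f (ev c) c = \<mu> b" using F[of b c] c by (simp add: ev_def)
    moreover have "f (ev c) c = \<mu> b'" using F[of b' c] c by (simp add: ev_def)
    ultimately show ?thesis by simp
  qed simp
  have "f u = \<mu> undefined *v u" for u
  proof
    fix i :: 'n
    obtain b where "b \<noteq> i" using ex_other[OF dim, of i] by metis
    then show "f u i = (\<mu> undefined *v u) i" using F[of b i u] C[of b undefined]
      by (simp add: vsmult_def mult.commute)
  qed
  then show ?thesis by blast
qed

lemma adj_eq:
  fixes g :: "('n::finite \<Rightarrow> 'k::field) \<Rightarrow> ('n \<Rightarrow> 'k)"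
  assumes dim: "card (UNIV :: 'n set) > 2"
    and eq: "\<And>u v. wedge (c *v u) v = wedge u (g v)"
  shows "g = (\<lambda>v. c *v v)"
proof (rule ext, rule ext)
  fix v :: "'n \<Rightarrow> 'k" and d :: 'n
  obtain a where a: "a \<noteq> d" using ex_other[OF dim, of d] by metis
  have "(c *v ev a) a * v d - (c *v ev a) d * v a = ev a a * g v d - ev a d * g v a"
    using eq by (metis wcomp)
  then show "g v d = (c *v v) d" using a by (simp add: ev_def vsmult_def)
qed

lemma scal_lin: "klinear (\<lambda>v::'n \<Rightarrow> 'k::field. c *v v)"
  by (simp add: klinear_def vsmult_def fun_eq_iff algebra_simps)

lemma scal_adj: "is_adjoint wedge (\<lambda>v::'n \<Rightarrow> 'k::field. c *v v) (\<lambda>v. c *v v)"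
  using scal_lin[of c] by (simp add: is_adjoint_def wedge_def vsmult_def fun_eq_iff algebra_simps)

lemma Adj_eq:
  assumes dim: "card (UNIV :: 'n::finite set) > 2"
  shows "Adj (wedge :: ('n \<Rightarrow> 'k::field) \<Rightarrow> _) = {(\<lambda>v. c *v v) | c. True}"
proof
  show "Adj (wedge :: ('n \<Rightarrow> 'k::field) \<Rightarrow> _) \<subseteq> {(\<lambda>v. c *v v) | c. True}"
  proof
    fix f :: "('n \<Rightarrow> 'k) \<Rightarrow> ('n \<Rightarrow> 'k)"
    assume "f \<in> Adj wedge"
    then obtain g where "is_adjoint wedge f g" by (auto simp: Adj_def)
    then have "\<And>u v. wedge (f u) v = wedge u (g v)" by (simp add: is_adjoint_def)
    from key[OF dim this] obtain c where "\<forall>u. f u = c *v u" by blast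
    then show "f \<in> {(\<lambda>v. c *v v) | c. True}" by (auto simp: fun_eq_iff)
  qed
  show "{(\<lambda>v. c *v v) | c. True} \<subseteq> Adj (wedge :: ('n \<Rightarrow> 'k::field) \<Rightarrow> _)"
    using scal_lin scal_adj by (auto simp: Adj_def)
qed


lemma kspan_sub: "ksubspace W \<Longrightarrow> S \<subseteq> W \<Longrightarrow> kspan S \<subseteq> W"
  by (auto simp: kspan_def)

lemma kspan_sup: "S \<subseteq> kspan S"
  by (auto simp: kspan_def)

lemma parallel:
  fixes u w :: "'n \<Rightarrow> 'k::field"
  assumes "wedge u w = 0" "u \<noteq> 0"
  shows "\<exists>t. w = t *v u"
proof -
  obtain i where i: "u i \<noteq> 0" using assms(2) by (auto simp: fun_eq_iff)
  have "w = (w i / u i) *v u"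
  proof
    fix j
    have "u i * w j - u j * w i = 0" using fun_cong[OF assms(1), of "(i,j)"] by (simp add: wedge_def)
    then show "w j = ((w i / u i) *v u) j" using i by (simp add: vsmult_def field_simps)
  qed
  then show ?thesis by blast
qed

lemma line_sub: "ksubspace {t *v u | t. True}"
  unfolding ksubspace_def
proof (intro conjI ballI allI)
  show "0 \<in> {t *v u | t. True}" by (rule CollectI, rule exI[of _ 0]) (simp add: vsmult_def fun_eq_iff)
next
  fix x y assume "x \<in> {t *v u | t. True}" "y \<in> {t *v u | t. True}"
  then obtain s t where "x = s *v u" "y = t *v u" by blast
  then show "x + y \<in> {t *v u | t. True}"
    by (intro CollectI exI[of _ "s + t"]) (simp add: vsmult_def fun_eq_iff algebra_simps)
next
  fix c x assume "x \<in> {t *v u | t. True}"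
  then obtain s where "x = s *v u" by blast
  then show "c *v x \<in> {t *v u | t. True}"
    by (intro CollectI exI[of _ "c * s"]) (simp add: vsmult_def fun_eq_iff algebra_simps)
qed

lemma not_line:
  assumes dim: "card (UNIV :: 'n::finite set) > 2"
  shows "\<not> (UNIV \<subseteq> {t *v (u::'n \<Rightarrow> 'k::field) | t. True})"
proof
  assume H: "UNIV \<subseteq> {t *v (u::'n \<Rightarrow> 'k::field) | t. True}"
  obtain a b :: 'n where ab: "a \<noteq> b" using ex_other[OF dim] by metis
  obtain t where t: "ev a = t *v u" using H by blast
  obtain s where s: "ev b = s *v u" using H by blast
  have 1: "t * u a = 1" "t * u b = 0" using fun_cong[OF t, of a] fun_cong[OF t, of b] ab
    by (auto simp: ev_def vsmult_def)
  have 2: "s * u b = 1" using fun_cong[OF s, of b] by (auto simp: ev_def vsmult_def)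
  from 1 have "u b = 0" by auto
  with 2 show False by simp
qed

lemma zero_ne_univ: "(0::'n \<Rightarrow> 'k::field) \<noteq> ev a"
  by (auto simp: fun_eq_iff ev_def)

lemma perp_ind:
  assumes dim: "card (UNIV :: 'n::finite set) > 2"
  shows "perp_indecomposable (wedge :: ('n \<Rightarrow> 'k::field) \<Rightarrow> _)"
  unfolding perp_indecomposable_def
proof (intro allI impI)
  fix X :: "('n \<Rightarrow> 'k) set set"
  assume pd: "perp_decomposition wedge X"
  have P1: "\<forall>W\<in>X. ksubspace W"
    and P2: "\<forall>U\<in>X. \<forall>W\<in>X. U \<noteq> W \<longrightarrow> (\<forall>u\<in>U. \<forall>w\<in>W. wedge u w = 0 \<and> wedge w u = 0)"
    and span: "kspan (\<Union>X) = UNIV"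
    and P4: "\<forall>Y. Y \<subset> X \<longrightarrow> kspan (\<Union>Y) \<noteq> UNIV"
    using pd unfolding perp_decomposition_def by simp_all
  have sub: "\<And>W. W \<in> X \<Longrightarrow> ksubspace W" using P1 by blast
  have orth: "\<And>U W u w. U \<in> X \<Longrightarrow> W \<in> X \<Longrightarrow> U \<noteq> W \<Longrightarrow> u \<in> U \<Longrightarrow> w \<in> W \<Longrightarrow> wedge u w = 0"
  proof -
    fix U W u w assume "U \<in> X" "W \<in> X" "U \<noteq> W" "u \<in> U" "w \<in> W"
    then show "wedge u w = 0" using P2 by simp
  qed
  have mini: "\<And>Y. Y \<subset> X \<Longrightarrow> kspan (\<Union>Y) \<noteq> UNIV" using P4 by blast
  show "X = {UNIV}"
  proof (cases "\<exists>U\<in>X. \<exists>W\<in>X. U \<noteq> W \<and> (\<exists>u\<in>U. u \<noteq> 0) \<and> (\<exists>w\<in>W. w \<noteq> 0)")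
    case True
    then obtain U W u w where UW: "U \<in> X" "W \<in> X" "U \<noteq> W" "u \<in> U" "u \<noteq> 0" "w \<in> W" "w \<noteq> 0"
      by blast
    have "\<Union>X \<subseteq> {t *v u | t. True}"
    proof
      fix x assume "x \<in> \<Union>X"
      then obtain Z where Z: "Z \<in> X" "x \<in> Z" by blast
      show "x \<in> {t *v u | t. True}"
      proof (cases "Z = U")
        case False
        then have "wedge u x = 0" using orth[OF UW(1) Z(1) _ UW(4) Z(2)] by simp
        then show ?thesis using parallel UW(5) by blast
      next
        case True
        have "wedge w x = 0" using orth[OF UW(2) Z(1) _ UW(6) Z(2)] UW(3) True by simp
        then obtain t where t: "x = t *v w" using parallel UW(7) by blast
        have "wedge u w = 0" using orth[OF UW(1) UW(2) UW(3) UW(4) UW(6)] .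
        then obtain s where s: "w = s *v u" using parallel UW(5) by blast
        have "x = (t * s) *v u" using t s by (simp add: vsmult_def fun_eq_iff)
        then show ?thesis by blast
      qed
    qed
    then have "kspan (\<Union>X) \<subseteq> {t *v u | t. True}" by (rule kspan_sub[OF line_sub])
    then have "UNIV \<subseteq> {t *v u | t. True}" unfolding span .
    then show ?thesis using not_line[OF dim, of u] by (rule notE[rotated])
  next
    case False
    have "\<exists>U\<in>X. \<exists>u\<in>U. u \<noteq> 0"
    proof (rule ccontr)
      assume "\<not> ?thesis"
      then have "\<Union>X \<subseteq> {0}" by blast
      moreover have "{0::'n \<Rightarrow> 'k} = {t *v 0 | t. True}" by (auto simp: vsmult_def fun_eq_iff)
      ultimately have "\<Union>X \<subseteq> {t *v 0 | t. True}" by simp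
      then have "kspan (\<Union>X) \<subseteq> {t *v 0 | t. True}" by (rule kspan_sub[OF line_sub])
      then have "UNIV \<subseteq> {t *v (0::'n \<Rightarrow> 'k) | t. True}" unfolding span .
      then show False using not_line[OF dim, of 0] by (rule notE[rotated])
    qed
    then obtain U u where U: "U \<in> X" "u \<in> U" "u \<noteq> 0" by blast
    have others: "W \<subseteq> {0}" if W: "W \<in> X" "W \<noteq> U" for W
    proof
      fix w assume w: "w \<in> W"
      show "w \<in> {0}"
      proof (rule ccontr)
        assume "w \<notin> {0}"
        then have "\<exists>U\<in>X. \<exists>W\<in>X. U \<noteq> W \<and> (\<exists>u\<in>U. u \<noteq> 0) \<and> (\<exists>w\<in>W. w \<noteq> 0)"
          using U W w by (intro bexI[OF _ U(1)] bexI[OF _ W(1)] conjI) auto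
        then show False using False by contradiction
      qed
    qed
    have "\<Union>X \<subseteq> U"
    proof
      fix x assume "x \<in> \<Union>X"
      then obtain Z where "Z \<in> X" "x \<in> Z" by blast
      then show "x \<in> U" using others[of Z] sub[OF U(1)] by (cases "Z = U") (auto simp: ksubspace_def)
    qed
    then have "kspan (\<Union>X) \<subseteq> U" by (rule kspan_sub[OF sub[OF U(1)]])
    then have UU: "U = UNIV" using span by auto
    have "X \<subseteq> {U}"
    proof
      fix W assume W: "W \<in> X"
      show "W \<in> {U}"
      proof (rule ccontr)
        assume "W \<notin> {U}"
        then have "{U} \<subset> X" using W U by blast
        moreover have "kspan (\<Union>{U}) = UNIV" using kspan_sup[of U] UU by auto
        ultimately show False using mini by blast
      qed
    qed
    then show ?thesis using U UU by blast
  qed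
qed


lemma scal_comp: "(\<lambda>v. c *v v) \<circ> (\<lambda>v::'n \<Rightarrow> 'k::field. d *v v) = (\<lambda>v. (c * d) *v v)"
  by (simp add: fun_eq_iff vsmult_def)

lemma scal_one: "(\<lambda>v::'n \<Rightarrow> 'k::field. 1 *v v) = id"
  by (simp add: fun_eq_iff vsmult_def)

lemma scal_zero: "(\<lambda>v::'n \<Rightarrow> 'k::field. 0 *v v) = 0"
  by (simp add: fun_eq_iff vsmult_def)

theorem lemma7p1:
  fixes b :: "('n::finite \<Rightarrow> 'k::field) \<Rightarrow> ('n \<Rightarrow> 'k) \<Rightarrow> ('n \<times> 'n \<Rightarrow> 'k)"
  assumes dim: "card (UNIV :: 'n set) > 2"
    and b_def: "b = wedge"
  shows "kbilinear b \<and> alternating b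
    \<and> Adj b = {(\<lambda>v. c *v v) | c. True}
    \<and> inj (\<lambda>c::'k. (\<lambda>v::'n \<Rightarrow> 'k. c *v v))
    \<and> (\<forall>f\<in>Adj b. \<forall>g. is_adjoint b f g \<longrightarrow> g = f)
    \<and> perp_indecomposable b
    \<and> jacobson_radical (Adj b) = {0}
    \<and> (\<forall>f\<in>Adj b. \<forall>g\<in>Adj b. f \<circ> g = g \<circ> f)
    \<and> (\<forall>f\<in>Adj b. f \<noteq> 0 \<longrightarrow> (\<exists>g\<in>Adj b. f \<circ> g = id \<and> g \<circ> f = id))"
proof -
  have AE: "Adj b = {(\<lambda>v. c *v v) | c. True}" using Adj_eq[OF dim] b_def by simp
  have bil: "kbilinear b"
    by (simp add: b_def kbilinear_def klinear_def wedge_def vsmult_def fun_eq_iff algebra_simps)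
  have alt: "alternating b" by (simp add: b_def alternating_def wedge_def fun_eq_iff)
  have inj: "inj (\<lambda>c::'k. (\<lambda>v::'n \<Rightarrow> 'k. c *v v))"
  proof
    fix c d :: 'k assume "(\<lambda>v::'n \<Rightarrow> 'k. c *v v) = (\<lambda>v. d *v v)"
    from fun_cong[OF this, of "\<lambda>_. 1"] show "c = d" by (simp add: vsmult_def fun_eq_iff)
  qed
  have adj: "\<forall>f\<in>Adj b. \<forall>g. is_adjoint b f g \<longrightarrow> g = f"
  proof (intro ballI allI impI)
    fix f g assume "f \<in> Adj b" "is_adjoint b f g"
    then obtain c where f: "f = (\<lambda>v. c *v v)" using AE by auto
    have "\<And>u v. wedge (c *v u) v = wedge u (g v)"
      using \<open>is_adjoint b f g\<close> f b_def by (simp add: is_adjoint_def)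
    then show "g = f" using adj_eq[OF dim] f by blast
  qed
  have pi: "perp_indecomposable b" using perp_ind[OF dim] b_def by simp
  obtain a0 :: 'n where True by blast
  have idne0: "(\<lambda>v::'n \<Rightarrow> 'k. v) \<noteq> (\<lambda>v. 0)"
    using zero_ne_univ[of a0, where 'k='k] by (metis zero_fun_def)
  have jr: "jacobson_radical (Adj b) = {0}"
  proof
    show "jacobson_radical (Adj b) \<subseteq> {0}"
    proof
      fix a assume a: "a \<in> jacobson_radical (Adj b)"
      then obtain c where ac: "a = (\<lambda>v. c *v v)" using AE by (auto simp: jacobson_radical_def)
      show "a \<in> {0}"
      proof (cases "c = 0")
        case True then show ?thesis using ac scal_zero by simp
      next
        case False
        have "(\<lambda>v. (1/c) *v v) \<in> Adj b" using AE by blast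
        then obtain y where "(\<lambda>v. v - (\<lambda>v. (1/c) *v v) (a v)) \<circ> y = id"
          using a unfolding jacobson_radical_def by blast
        moreover have "(\<lambda>v. v - (\<lambda>v. (1/c) *v v) (a v)) = (\<lambda>v. 0)"
          using False ac by (simp add: fun_eq_iff vsmult_def)
        ultimately have "(\<lambda>v::'n \<Rightarrow> 'k. 0) = id" by (simp add: comp_def)
        from fun_cong[OF this, of "ev a0"] have "0 = (ev a0 :: 'n \<Rightarrow> 'k)" by simp
        then show ?thesis using zero_ne_univ[of a0] by blast
      qed
    qed
    show "{0} \<subseteq> jacobson_radical (Adj b)"
    proof
      fix a assume "a \<in> {0::('n \<Rightarrow> 'k) \<Rightarrow> ('n \<Rightarrow> 'k)}"
      then have a: "a = 0" by simp
      have a_in: "a \<in> Adj b" unfolding AE a by (rule CollectI, rule exI[of _ 0], simp add: scal_zero)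
      have idA: "id \<in> Adj b" unfolding AE by (rule CollectI, rule exI[of _ 1], simp add: scal_one)
      have "\<forall>x\<in>Adj b. \<exists>y\<in>Adj b. (\<lambda>v. v - x (a v)) \<circ> y = id \<and> y \<circ> (\<lambda>v. v - x (a v)) = id"
      proof
        fix x assume "x \<in> Adj b"
        then obtain d where x: "x = (\<lambda>v. d *v v)" using AE by auto
        have "(\<lambda>v. v - x (a v)) = id" using a x by (simp add: fun_eq_iff vsmult_def)
        then show "\<exists>y\<in>Adj b. (\<lambda>v. v - x (a v)) \<circ> y = id \<and> y \<circ> (\<lambda>v. v - x (a v)) = id"
          using idA by auto
      qed
      then show "a \<in> jacobson_radical (Adj b)" using a_in by (simp add: jacobson_radical_def)
    qed
  qed
  have comm: "\<forall>f\<in>Adj b. \<forall>g\<in>Adj b. f \<circ> g = g \<circ> f"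
  proof (intro ballI)
    fix f g assume "f \<in> Adj b" "g \<in> Adj b"
    then obtain c d where "f = (\<lambda>v. c *v v)" "g = (\<lambda>v. d *v v)" using AE by auto
    then show "f \<circ> g = g \<circ> f" by (simp add: fun_eq_iff vsmult_def algebra_simps)
  qed
  have inv: "\<forall>f\<in>Adj b. f \<noteq> 0 \<longrightarrow> (\<exists>g\<in>Adj b. f \<circ> g = id \<and> g \<circ> f = id)"
  proof (intro ballI impI)
    fix f assume "f \<in> Adj b" "f \<noteq> 0"
    then obtain c where f: "f = (\<lambda>v. c *v v)" using AE by auto
    with \<open>f \<noteq> 0\<close> scal_zero have "c \<noteq> 0" by auto
    have "(\<lambda>v. (1/c) *v v) \<in> Adj b" using AE by blast
    moreover have "f \<circ> (\<lambda>v. (1/c) *v v) = id" "(\<lambda>v. (1/c) *v v) \<circ> f = id"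
      using f \<open>c \<noteq> 0\<close> by (simp_all add: fun_eq_iff vsmult_def)
    ultimately show "\<exists>g\<in>Adj b. f \<circ> g = id \<and> g \<circ> f = id" by blast
  qed
  show ?thesis by (intro conjI bil alt AE inj adj pi jr comm inv)
qed

end
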